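(* Let $\mathfrak{g}$ be a $\mathrm{Lie}$-nilpotent Leibniz algebra and $f:\mathfrak{g}\twoheadrightarrow\mathfrak{q}$ a surjective homomorphism of Leibniz algebras. If $\ker(f)\subseteq[\mathfrak{g},\mathfrak{g}]_{\mathrm{Lie}}$ and $\mathcal{M}^{\mathrm{Lie}}(\mathfrak{q})=0$, then $f$ is an isomorphism. In particular, if $\mathcal{M}^{\mathrm{Lie}}(\mathfrak{g}/[\mathfrak{g},\mathfrak{g}]_{\mathrm{Lie}})=0$, then $\mathcal{M}^{\mathrm{Lie}}(\mathfrak{g})=0$.
   Context: Fix a field $\mathbb{K}$ with $\frac12\in\mathbb{K}$. A Leibniz algebra is a $\mathbb{K}$-vector space with a bilinear bracket satisfying $[x,[y,z]]=[[x,y],z]-[[x,z],y]$. For two-sided ideals $\mathfrak{m},\mathfrak{n}$, $[\mathfrak{m},\mathfrak{n}]_{\mathrm{Lie}}$ is the subspace spanned by all $[m,n]+[n,m]$. Lower $\mathrm{Lie}$-central series: $\mathfrak{g}^{[1]}=\mathfrak{g}$, $\mathfrak{g}^{[i]}=[\mathfrak{g}^{[i-1]},\mathfrak{g}]_{\mathrm{Lie}}$; $\mathfrak{g}$ is $\mathrm{Lie}$-nilpotent if some $\mathfrak{g}^{[k]}=0$. For a free presentation $0\to\mathfrak{r}\to\mathfrak{f}\to\mathfrak{g}\to0$ ($\mathfrak{f}$ free Leibniz), $\mathcal{M}^{\mathrm{Lie}}(\mathfrak{g})=\frac{\mathfrak{r}\cap[\mathfrak{f},\mathfrak{f}]_{\mathrm{Lie}}}{[\mathfrak{f},\mathfrak{r}]_{\mathrm{Lie}}}$,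 independent of the presentation up to isomorphism. *)

theory Defs
  imports Main "HOL.Vector_Spaces" "HOL-Library.Function_Algebras"
begin

definition leibniz :: "('k::field \<Rightarrow> 'a::ab_group_add \<Rightarrow> 'a) \<Rightarrow> 'a set \<Rightarrow> ('a \<Rightarrow> 'a \<Rightarrow> 'a) \<Rightarrow> bool" where
  "leibniz sc L br \<longleftrightarrow> vector_space sc \<and> module.subspace sc L
     \<and> (\<forall>x\<in>L. \<forall>y\<in>L. br x y \<in> L)
     \<and> (\<forall>x\<in>L. \<forall>y\<in>L. \<forall>z\<in>L. br (x + y) z = br x z + br y z \<and> br x (y + z) = br x y + br x z)
     \<and> (\<forall>c. \<forall>x\<in>L. \<forall>y\<in>L. br (sc c x) y = sc c (br x y) \<and> br x (sc c y) = sc c (br x y))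
     \<and> (\<forall>x\<in>L. \<forall>y\<in>L. \<forall>z\<in>L. br x (br y z) = br (br x y) z - br (br x z) y)"

definition lie_sp :: "('k::field \<Rightarrow> 'a::ab_group_add \<Rightarrow> 'a) \<Rightarrow> ('a \<Rightarrow> 'a \<Rightarrow> 'a) \<Rightarrow> 'a set \<Rightarrow> 'a set \<Rightarrow> 'a set" where
  "lie_sp sc br M N = module.span sc {br m n + br n m | m n. m \<in> M \<and> n \<in> N}"

(* lower Lie-central series, shifted: lcs n = g^[n+1] *)
fun lie_lcs :: "('k::field \<Rightarrow> 'a::ab_group_add \<Rightarrow> 'a) \<Rightarrow> ('a \<Rightarrow> 'a \<Rightarrow> 'a) \<Rightarrow> 'a set \<Rightarrow> nat \<Rightarrow> 'a set" where
  "lie_lcs sc br L 0 = L"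
| "lie_lcs sc br L (Suc n) = lie_sp sc br (lie_lcs sc br L n) L"

definition lie_nilpotent :: "('k::field \<Rightarrow> 'a::ab_group_add \<Rightarrow> 'a) \<Rightarrow> ('a \<Rightarrow> 'a \<Rightarrow> 'a) \<Rightarrow> 'a set \<Rightarrow> bool" where
  "lie_nilpotent sc br L \<longleftrightarrow> (\<exists>k. lie_lcs sc br L k = {0})"

definition leib_hom :: "('k::field \<Rightarrow> 'a::ab_group_add \<Rightarrow> 'a) \<Rightarrow> ('a \<Rightarrow> 'a \<Rightarrow> 'a)
     \<Rightarrow> ('k \<Rightarrow> 'b::ab_group_add \<Rightarrow> 'b) \<Rightarrow> ('b \<Rightarrow> 'b \<Rightarrow> 'b) \<Rightarrow> ('a \<Rightarrow> 'b) \<Rightarrow> bool" where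
  "leib_hom sa ba sb bb f \<longleftrightarrow> Vector_Spaces.linear sa sb f \<and> (\<forall>x y. f (ba x y) = bb (f x) (f y))"

(* ---- The free Leibniz algebra on a set of generators (Loday's construction) ----
   Underlying space: finitely supported functions on nonempty words, i.e. the reduced
   tensor algebra T(V) with V having basis the generators.  Bracket on words:
     [u, v] = u v   (v a letter),   [u, w v] = [u, w] v - [u v, w].
   The second word is stored reversed to make the recursion structural. *)

definition fsc :: "'k::field \<Rightarrow> ('x list \<Rightarrow> 'k) \<Rightarrow> ('x list \<Rightarrow> 'k)" where
  "fsc c \<phi> = (\<lambda>w. c * \<phi> w)"

definition fdelta :: "'x list \<Rightarrow> ('x list \<Rightarrow> 'k::field)" where
  "fdelta u = (\<lambda>w. if w = u then 1 else 0)"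

(* right multiplication by a letter v: linear extension of w \<mapsto> w v *)
definition fapp :: "'x \<Rightarrow> ('x list \<Rightarrow> 'k::field) \<Rightarrow> ('x list \<Rightarrow> 'k)" where
  "fapp v \<phi> = (\<lambda>w. if w \<noteq> [] \<and> last w = v then \<phi> (butlast w) else 0)"

fun wbr_rev :: "'x list \<Rightarrow> 'x list \<Rightarrow> ('x list \<Rightarrow> 'k::field)" where
  "wbr_rev u [] = 0"
| "wbr_rev u [v] = fdelta (u @ [v])"
| "wbr_rev u (v # v' # r) = fapp v (wbr_rev u (v' # r)) - wbr_rev (u @ [v]) (v' # r)"

definition wbr :: "'x list \<Rightarrow> 'x list \<Rightarrow> ('x list \<Rightarrow> 'k::field)" where
  "wbr u w = wbr_rev u (rev w)"

definition fsupp :: "('x list \<Rightarrow> 'k::field) \<Rightarrow> 'x list set" where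
  "fsupp \<phi> = {w. \<phi> w \<noteq> 0}"

definition free_carrier :: "('x list \<Rightarrow> 'k::field) set" where
  "free_carrier = {\<phi>. finite (fsupp \<phi>) \<and> \<phi> [] = 0}"

definition fbr :: "('x list \<Rightarrow> 'k::field) \<Rightarrow> ('x list \<Rightarrow> 'k) \<Rightarrow> ('x list \<Rightarrow> 'k)" where
  "fbr \<phi> \<psi> = (\<Sum>u\<in>fsupp \<phi>. \<Sum>w\<in>fsupp \<psi>. fsc (\<phi> u * \<psi> w) (wbr u w))"

(* canonical free presentation of q (generators = all elements of q):
   the homomorphism sending the word x1...xn to [..[[x1,x2],x3],..,xn] *)
definition left_normed :: "('b \<Rightarrow> 'b \<Rightarrow> 'b) \<Rightarrow> 'b list \<Rightarrow> 'b" where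
  "left_normed br w = foldl br (hd w) (tl w)"

definition pres_map :: "('k::field \<Rightarrow> 'b::ab_group_add \<Rightarrow> 'b) \<Rightarrow> ('b \<Rightarrow> 'b \<Rightarrow> 'b) \<Rightarrow> ('b list \<Rightarrow> 'k) \<Rightarrow> 'b" where
  "pres_map sc br \<phi> = (\<Sum>w\<in>fsupp \<phi>. sc (\<phi> w) (left_normed br w))"

definition pres_ker :: "('k::field \<Rightarrow> 'b::ab_group_add \<Rightarrow> 'b) \<Rightarrow> ('b \<Rightarrow> 'b \<Rightarrow> 'b) \<Rightarrow> ('b list \<Rightarrow> 'k) set" where
  "pres_ker sc br = {\<phi> \<in> free_carrier. pres_map sc br \<phi> = 0}"

(* M^Lie(q) = 0, computed via the canonical free presentation 0 -> r -> f -> q -> 0: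
   (r \<inter> [f,f]_Lie) / [f,r]_Lie = 0 *)
definition schur_lie_zero :: "('k::field \<Rightarrow> 'b::ab_group_add \<Rightarrow> 'b) \<Rightarrow> ('b \<Rightarrow> 'b \<Rightarrow> 'b) \<Rightarrow> bool" where
  "schur_lie_zero sc br \<longleftrightarrow>
     pres_ker sc br \<inter> lie_sp (fsc :: 'k \<Rightarrow> _) fbr free_carrier free_carrier
       \<subseteq> lie_sp (fsc :: 'k \<Rightarrow> _) fbr free_carrier (pres_ker sc br)"

end

theory Submission
  imports Defs
begin

locale leib =
  fixes sc :: "'k::field \<Rightarrow> 'a::ab_group_add \<Rightarrow> 'a" and br :: "'a \<Rightarrow> 'a \<Rightarrow> 'a"
  assumes LL: "leibniz sc UNIV br"
begin

sublocale vector_space sc using LL by (simp add: leibniz_def)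

lemma addL: "br (x + y) z = br x z + br y z" and addR: "br x (y + z) = br x y + br x z"
  and scL: "br (sc c x) y = sc c (br x y)" and scR: "br x (sc c y) = sc c (br x y)"
  and jac: "br x (br y z) = br (br x y) z - br (br x z) y"
  using LL by (simp_all add: leibniz_def)

lemma zeroL[simp]: "br 0 y = 0"
  using addL[of 0 0 y] by simp
lemma zeroR[simp]: "br y 0 = 0"
  using addR[of y 0 0] by simp
lemma negL: "br (- x) y = - br x y"
proof -
  have "br (-x) y + br x y = 0" using addL[of "-x" x y] by simp
  thus ?thesis by (simp add: eq_neg_iff_add_eq_0)
qed
lemma negR: "br y (- x) = - br y x"
proof -
  have "br y (-x) + br y x = 0" using addR[of y "-x" x] by simp
  thus ?thesis by (simp add: eq_neg_iff_add_eq_0)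
qed
lemma diffL: "br (x - y) z = br x z - br y z"
  by (metis diff_conv_add_uminus addL negL)
lemma diffR: "br z (x - y) = br z x - br z y"
  by (metis diff_conv_add_uminus addR negR)
lemma sumL: "br (sum g S) y = (\<Sum>i\<in>S. br (g i) y)"
  by (induct S rule: infinite_finite_induct) (simp_all add: addL)
lemma sumR: "br y (sum g S) = (\<Sum>i\<in>S. br y (g i))"
  by (induct S rule: infinite_finite_induct) (simp_all add: addR)

end

lemma fun_sum_apply': "(sum g S) x = (\<Sum>i\<in>S. g i x)"
  by (induct S rule: infinite_finite_induct) simp_all

lemma fsc_vs: "vector_space (fsc :: 'k::field \<Rightarrow> ('x list \<Rightarrow> 'k) \<Rightarrow> _)"
  by unfold_locales (simp_all add: fsc_def fun_eq_iff distrib_left distrib_right)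

lemma fsc_mod: "module (fsc :: 'k::field \<Rightarrow> ('x list \<Rightarrow> 'k) \<Rightarrow> _)"
  using fsc_vs module_iff_vector_space by blast

lemma fsc_apply[simp]: "fsc c \<phi> w = c * \<phi> w" by (simp add: fsc_def)

lemma wbr_rev_nil: "wbr_rev u r [] = 0"
  by (induct u r rule: wbr_rev.induct) (auto simp: fdelta_def fapp_def)

lemma fsupp_fdelta: "fsupp (fdelta u :: 'x list \<Rightarrow> 'k::field) = {u}"
  by (auto simp: fsupp_def fdelta_def)

lemma fsupp_fapp: "fsupp (fapp v \<phi>) = (\<lambda>w. w @ [v]) ` fsupp \<phi>"
proof
  show "fsupp (fapp v \<phi>) \<subseteq> (\<lambda>w. w @ [v]) ` fsupp \<phi>"
  proof
    fix x assume "x \<in> fsupp (fapp v \<phi>)"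
    then have h: "x \<noteq> []" "last x = v" "\<phi> (butlast x) \<noteq> 0"
      by (simp_all add: fsupp_def fapp_def split: if_splits)
    then have "x = butlast x @ [v]" using append_butlast_last_id by metis
    moreover have "butlast x \<in> fsupp \<phi>" using h by (simp add: fsupp_def)
    ultimately show "x \<in> (\<lambda>w. w @ [v]) ` fsupp \<phi>" by (rule image_eqI)
  qed
  show "(\<lambda>w. w @ [v]) ` fsupp \<phi> \<subseteq> fsupp (fapp v \<phi>)"
    by (auto simp: fsupp_def fapp_def)
qed

lemma fsupp_diff: "fsupp (\<phi> - \<chi>) \<subseteq> fsupp \<phi> \<union> fsupp \<chi>"
  by (auto simp: fsupp_def)
lemma fsupp_add: "fsupp (\<phi> + \<chi>) \<subseteq> fsupp \<phi> \<union> fsupp \<chi>"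
  by (auto simp: fsupp_def)
lemma fsupp_fsc: "fsupp (fsc c \<phi>) \<subseteq> fsupp \<phi>"
  by (auto simp: fsupp_def)
lemma fsupp_zero[simp]: "fsupp 0 = {}"
  by (auto simp: fsupp_def)
lemma fsupp_sum: "fsupp (sum g S) \<subseteq> (\<Union>i\<in>S. fsupp (g i))"
proof
  fix x assume "x \<in> fsupp (sum g S)"
  then have "(\<Sum>i\<in>S. g i x) \<noteq> 0" by (simp add: fsupp_def fun_sum_apply')
  then obtain i where "i \<in> S" "g i x \<noteq> 0" using sum.neutral by metis
  thus "x \<in> (\<Union>i\<in>S. fsupp (g i))" by (auto simp: fsupp_def)
qed

lemma finite_wbr_rev: "finite (fsupp (wbr_rev u r))"
proof (induct u r rule: wbr_rev.induct)
  case (3 u v v' r)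
  show ?case
    apply (simp only: wbr_rev.simps)
    apply (rule finite_subset[OF fsupp_diff])
    using 3 by (simp add: fsupp_fapp)
next
  case (1 u) show ?case by (simp add: fsupp_def)
next
  case (2 u v) show ?case by (simp only: wbr_rev.simps fsupp_fdelta) simp
qed

lemma FC_iff: "\<phi> \<in> free_carrier \<longleftrightarrow> finite (fsupp \<phi>) \<and> \<phi> [] = 0"
  by (simp add: free_carrier_def)

lemma wbr_rev_FC: "wbr_rev u r \<in> free_carrier"
  by (simp add: FC_iff finite_wbr_rev wbr_rev_nil)
lemma wbr_FC: "wbr u w \<in> free_carrier"
  by (simp add: wbr_def wbr_rev_FC)

lemma FC_add: "\<phi> \<in> free_carrier \<Longrightarrow> \<chi> \<in> free_carrier \<Longrightarrow> \<phi> + \<chi> \<in> free_carrier"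
  by (auto simp: FC_iff intro: finite_subset[OF fsupp_add])
lemma FC_diff: "\<phi> \<in> free_carrier \<Longrightarrow> \<chi> \<in> free_carrier \<Longrightarrow> \<phi> - \<chi> \<in> free_carrier"
  by (auto simp: FC_iff intro: finite_subset[OF fsupp_diff])
lemma FC_fsc: "\<phi> \<in> free_carrier \<Longrightarrow> fsc c \<phi> \<in> free_carrier"
  by (auto simp: FC_iff intro: finite_subset[OF fsupp_fsc])
lemma FC_zero: "0 \<in> free_carrier"
  by (simp add: FC_iff)
lemma FC_sum: "(\<And>i. i \<in> S \<Longrightarrow> g i \<in> free_carrier) \<Longrightarrow> sum g S \<in> free_carrier"
  by (induct S rule: infinite_finite_induct) (auto simp: FC_zero FC_add)
lemma fbr_FC: "fbr \<phi> \<chi> \<in> free_carrier"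
  unfolding fbr_def
  apply (rule FC_sum)
  apply (rule FC_sum)
  apply (rule FC_fsc)
  apply (rule wbr_FC)
  done

lemma subspace_FC: "module.subspace (fsc :: 'k::field \<Rightarrow> ('x list \<Rightarrow> 'k) \<Rightarrow> _) free_carrier"
  apply (rule module.subspaceI[OF fsc_mod])
  apply (rule FC_zero)
  apply (erule (1) FC_add)
  apply (erule FC_fsc)
  done

lemma lie_sp_FC: "lie_sp (fsc :: 'k::field \<Rightarrow> ('x list \<Rightarrow> 'k) \<Rightarrow> _) fbr X Y \<subseteq> free_carrier"
  unfolding lie_sp_def
  apply (rule module.span_minimal[OF fsc_mod _ subspace_FC])
  using FC_add fbr_FC by blast

lemma hom_lin: "leib_hom sa ba sb bb f \<Longrightarrow> module_hom sa sb f"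
  by (simp add: leib_hom_def module_hom_iff_linear)
lemma hom_br: "leib_hom sa ba sb bb f \<Longrightarrow> f (ba x y) = bb (f x) (f y)"
  by (simp add: leib_hom_def)

lemma hom_foldl: "leib_hom sa ba sb bb f \<Longrightarrow> f (foldl ba a xs) = foldl bb (f a) (map f xs)"
  by (induct xs arbitrary: a) (simp_all add: hom_br)

lemma hom_left_normed: "leib_hom sa ba sb bb f \<Longrightarrow> w \<noteq> [] \<Longrightarrow>
   f (left_normed ba w) = left_normed bb (map f w)"
  by (cases w) (simp_all add: left_normed_def hom_foldl)

lemma FC_fin: "\<phi> \<in> free_carrier \<Longrightarrow> finite (fsupp \<phi>)"
  by (simp add: FC_iff)

lemma FC_fsupp: "\<phi> \<in> free_carrier \<Longrightarrow> w \<in> fsupp \<phi> \<Longrightarrow> w \<noteq> []"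
  by (auto simp: FC_iff fsupp_def)

locale p1 = g: leib sg bg + q: leib sq bq
  for sg :: "'k::field \<Rightarrow> 'a::ab_group_add \<Rightarrow> 'a" and bg
  and sq :: "'k \<Rightarrow> 'b::ab_group_add \<Rightarrow> 'b" and bq +
  fixes f :: "'a \<Rightarrow> 'b"
  assumes hom: "leib_hom sg bg sq bq f" and sf: "surj f"
begin

definition s :: "'b \<Rightarrow> 'a" where "s y = (SOME x. f x = y)"
lemma fs[simp]: "f (s y) = y"
  unfolding s_def using sf by (metis (mono_tags) someI surjD)

definition Lw :: "'b list \<Rightarrow> 'a" where "Lw w = left_normed bg (map s w)"

definition psi :: "('b list \<Rightarrow> 'k) \<Rightarrow> 'a" where
  "psi \<phi> = (\<Sum>w\<in>fsupp \<phi>. sg (\<phi> w) (Lw w))"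

lemma fadd: "f (x + y) = f x + f y" using module_hom.add[OF hom_lin[OF hom]] .
lemma fscale: "f (sg c x) = sq c (f x)" using module_hom.scale[OF hom_lin[OF hom]] .
lemma fdiff: "f (x - y) = f x - f y" using module_hom.diff[OF hom_lin[OF hom]] .
lemma fzero[simp]: "f 0 = 0" using module_hom.zero[OF hom_lin[OF hom]] .
lemma fsum: "f (sum h S) = (\<Sum>i\<in>S. f (h i))" using module_hom.sum[OF hom_lin[OF hom]] .

lemma psi_superset: "finite S \<Longrightarrow> fsupp \<phi> \<subseteq> S \<Longrightarrow> psi \<phi> = (\<Sum>w\<in>S. sg (\<phi> w) (Lw w))"
  unfolding psi_def by (rule sum.mono_neutral_left) (auto simp: fsupp_def)

lemma psi_add: "finite (fsupp \<phi>) \<Longrightarrow> finite (fsupp \<chi>) \<Longrightarrow> psi (\<phi> + \<chi>) = psi \<phi> + psi \<chi>"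
proof -
  assume a: "finite (fsupp \<phi>)" "finite (fsupp \<chi>)"
  let ?S = "fsupp \<phi> \<union> fsupp \<chi>"
  have "psi (\<phi> + \<chi>) = (\<Sum>w\<in>?S. sg ((\<phi> + \<chi>) w) (Lw w))"
    using a fsupp_add by (intro psi_superset) auto
  also have "\<dots> = (\<Sum>w\<in>?S. sg (\<phi> w) (Lw w)) + (\<Sum>w\<in>?S. sg (\<chi> w) (Lw w))"
    by (simp add: g.scale_left_distrib sum.distrib)
  also have "\<dots> = psi \<phi> + psi \<chi>"
    using a by (simp only: psi_superset[of ?S \<phi>] psi_superset[of ?S \<chi>] finite_Un Un_upper1 Un_upper2)
  finally show ?thesis .
qed

lemma psi_diff: "finite (fsupp \<phi>) \<Longrightarrow> finite (fsupp \<chi>) \<Longrightarrow> psi (\<phi> - \<chi>) = psi \<phi> - psi \<chi>"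
proof -
  assume a: "finite (fsupp \<phi>)" "finite (fsupp \<chi>)"
  let ?S = "fsupp \<phi> \<union> fsupp \<chi>"
  have "psi (\<phi> - \<chi>) = (\<Sum>w\<in>?S. sg ((\<phi> - \<chi>) w) (Lw w))"
    using a fsupp_diff by (intro psi_superset) auto
  also have "\<dots> = (\<Sum>w\<in>?S. sg (\<phi> w) (Lw w)) - (\<Sum>w\<in>?S. sg (\<chi> w) (Lw w))"
    by (simp add: g.scale_left_diff_distrib sum_subtractf)
  also have "\<dots> = psi \<phi> - psi \<chi>"
    using a by (simp only: psi_superset[of ?S \<phi>] psi_superset[of ?S \<chi>] finite_Un Un_upper1 Un_upper2)
  finally show ?thesis .
qed

lemma psi_fsc: "finite (fsupp \<phi>) \<Longrightarrow> psi (fsc c \<phi>) = sg c (psi \<phi>)"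
proof -
  assume a: "finite (fsupp \<phi>)"
  have "psi (fsc c \<phi>) = (\<Sum>w\<in>fsupp \<phi>. sg (fsc c \<phi> w) (Lw w))"
    using a fsupp_fsc by (intro psi_superset) auto
  also have "\<dots> = sg c (psi \<phi>)"
    by (simp add: psi_def g.scale_sum_right)
  finally show ?thesis .
qed

lemma psi_zero[simp]: "psi 0 = 0"
  by (simp add: psi_def)

lemma psi_sum: "(\<And>i. i \<in> I \<Longrightarrow> finite (fsupp (h i))) \<Longrightarrow> psi (sum h I) = (\<Sum>i\<in>I. psi (h i))"
proof (induct I rule: infinite_finite_induct)
  case (insert x F)
  have fF: "finite (fsupp (sum h F))"
    by (rule finite_subset[OF fsupp_sum]) (use insert in auto)
  have "psi (sum h (insert x F)) = psi (h x + sum h F)"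
    by (simp only: sum.insert[OF insert(1,2)])
  also have "\<dots> = psi (h x) + psi (sum h F)"
    by (rule psi_add[OF _ fF]) (use insert in auto)
  also have "\<dots> = psi (h x) + (\<Sum>i\<in>F. psi (h i))"
    using insert by simp
  finally show ?case by (simp only: sum.insert[OF insert(1,2)])
qed simp_all

lemma Lw_snoc: "w \<noteq> [] \<Longrightarrow> Lw (w @ [v]) = bg (Lw w) (s v)"
  by (cases w) (simp_all add: Lw_def left_normed_def)
lemma Lw_single: "Lw [v] = s v"
  by (simp add: Lw_def left_normed_def)

lemma psi_fdelta: "psi (fdelta w) = Lw w"
  by (simp add: psi_def fsupp_fdelta) (simp add: fdelta_def)


lemma psi_fapp: "\<phi> \<in> free_carrier \<Longrightarrow> psi (fapp v \<phi>) = bg (psi \<phi>) (s v)"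
proof -
  assume a: "\<phi> \<in> free_carrier"
  have inj: "inj_on (\<lambda>w. w @ [v]) (fsupp \<phi>)" by (simp add: inj_on_def)
  have "psi (fapp v \<phi>) = (\<Sum>x\<in>(\<lambda>w. w @ [v]) ` fsupp \<phi>. sg (fapp v \<phi> x) (Lw x))"
    by (simp add: psi_def fsupp_fapp)
  also have "\<dots> = (\<Sum>w\<in>fsupp \<phi>. sg (fapp v \<phi> (w @ [v])) (Lw (w @ [v])))"
    by (simp add: sum.reindex[OF inj])
  also have "\<dots> = (\<Sum>w\<in>fsupp \<phi>. sg (\<phi> w) (bg (Lw w) (s v)))"
    by (rule sum.cong) (simp_all add: fapp_def Lw_snoc FC_fsupp[OF a])
  also have "\<dots> = bg (psi \<phi>) (s v)"
    by (simp add: psi_def g.sumL g.scL)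
  finally show ?thesis .
qed

lemma psi_wbr_rev: "u \<noteq> [] \<Longrightarrow> r \<noteq> [] \<Longrightarrow> psi (wbr_rev u r) = bg (Lw u) (Lw (rev r))"
proof (induct u r rule: wbr_rev.induct)
  case (1 u) then show ?case by simp
next
  case (2 u v) then show ?case by (simp add: psi_fdelta Lw_snoc Lw_single)
next
  case (3 u v v' r)
  have IH1: "psi (wbr_rev u (v' # r)) = bg (Lw u) (Lw (rev (v' # r)))" using 3 by simp
  have IH2: "psi (wbr_rev (u @ [v]) (v' # r)) = bg (Lw (u @ [v])) (Lw (rev (v' # r)))" using 3 by simp
  have F1: "finite (fsupp (fapp v (wbr_rev u (v' # r))))"
    by (simp add: fsupp_fapp finite_wbr_rev)
  have "psi (wbr_rev u (v # v' # r)) = psi (fapp v (wbr_rev u (v' # r))) - psi (wbr_rev (u @ [v]) (v' # r))"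
    by (simp only: wbr_rev.simps psi_diff[OF F1 finite_wbr_rev])
  also have "\<dots> = bg (bg (Lw u) (Lw (rev (v' # r)))) (s v) - bg (bg (Lw u) (s v)) (Lw (rev (v' # r)))"
    by (simp only: psi_fapp[OF wbr_rev_FC] IH1 IH2 Lw_snoc[OF 3(3)])
  also have "\<dots> = bg (Lw u) (bg (Lw (rev (v' # r))) (s v))"
    by (simp only: g.jac)
  also have "\<dots> = bg (Lw u) (Lw (rev (v' # r) @ [v]))"
    by (subst Lw_snoc) simp_all
  also have "\<dots> = bg (Lw u) (Lw (rev (v # v' # r)))"
    by simp
  finally show ?case .
qed

lemma psi_wbr: "u \<noteq> [] \<Longrightarrow> w \<noteq> [] \<Longrightarrow> psi (wbr u w) = bg (Lw u) (Lw w)"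
  by (simp add: wbr_def psi_wbr_rev)

lemma psi_fbr: "\<phi> \<in> free_carrier \<Longrightarrow> \<chi> \<in> free_carrier \<Longrightarrow> psi (fbr \<phi> \<chi>) = bg (psi \<phi>) (psi \<chi>)"
proof -
  assume a: "\<phi> \<in> free_carrier" and b: "\<chi> \<in> free_carrier"
  have fin: "\<And>h S. (\<And>i. i \<in> S \<Longrightarrow> h i \<in> free_carrier) \<Longrightarrow> finite (fsupp (sum h S))"
    using FC_sum FC_iff by blast
  have "psi (fbr \<phi> \<chi>) = (\<Sum>u\<in>fsupp \<phi>. \<Sum>w\<in>fsupp \<chi>. psi (fsc (\<phi> u * \<chi> w) (wbr u w)))"
    unfolding fbr_def
    apply (subst psi_sum)
     apply (rule fin, rule FC_fsc, rule wbr_FC)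
    apply (rule sum.cong, rule refl)
    apply (subst psi_sum)
     apply (rule FC_fin[OF FC_fsc[OF wbr_FC]])
    apply (rule refl)
    done
  also have "\<dots> = (\<Sum>u\<in>fsupp \<phi>. \<Sum>w\<in>fsupp \<chi>. sg (\<phi> u * \<chi> w) (bg (Lw u) (Lw w)))"
    apply (rule sum.cong, rule refl)+
    apply (subst psi_fsc)
     apply (rule FC_fin[OF wbr_FC])
    apply (simp add: psi_wbr FC_fsupp[OF a] FC_fsupp[OF b])
    done
  also have "\<dots> = bg (psi \<phi>) (psi \<chi>)"
    by (simp only: psi_def g.sumL, simp only: g.sumR g.scL g.scR g.scale_scale mult.commute)
  finally show ?thesis .
qed

lemma f_Lw: "w \<noteq> [] \<Longrightarrow> f (Lw w) = left_normed bq w"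
proof -
  assume "w \<noteq> []"
  then have "f (Lw w) = left_normed bq (map f (map s w))"
    unfolding Lw_def by (simp add: hom_left_normed[OF hom])
  also have "map f (map s w) = w" by (induct w) simp_all
  finally show ?thesis .
qed

lemma f_psi: "\<phi> \<in> free_carrier \<Longrightarrow> f (psi \<phi>) = pres_map sq bq \<phi>"
  unfolding psi_def pres_map_def
  by (simp add: fsum fscale f_Lw FC_fsupp)

end

context p1 begin

lemma fdelta_FC: "fdelta [x] \<in> free_carrier"
  by (simp add: FC_iff fsupp_fdelta) (simp add: fdelta_def)

lemma part1:
  assumes nil: "lie_nilpotent sg bg UNIV"
    and kerin: "{x. f x = 0} \<subseteq> lie_sp sg bg UNIV UNIV"
    and schur: "schur_lie_zero sq bq"
  shows "bij f"
proof -
  define K where "K = {x. f x = 0}"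
  define J where "J = lie_sp sg bg K UNIV"
  define FF where "FF = lie_sp (fsc :: 'k \<Rightarrow> ('b list \<Rightarrow> 'k) \<Rightarrow> _) fbr free_carrier free_carrier"
  define R where "R = pres_ker sq bq"
  have FM: "module (fsc :: 'k \<Rightarrow> ('b list \<Rightarrow> 'k) \<Rightarrow> _)" by (rule fsc_mod)
  have Ksub: "g.subspace K"
    unfolding K_def
    by (rule g.subspaceI) (simp_all add: fadd fscale)
  have Jsub: "g.subspace J" unfolding J_def lie_sp_def by simp
  have genJ: "\<And>m n. m \<in> K \<Longrightarrow> bg m n + bg n m \<in> J"
    unfolding J_def lie_sp_def by (rule g.span_base) blast
  have JK: "J \<subseteq> K"
    unfolding J_def lie_sp_def
  proof (rule g.span_minimal[OF _ Ksub])
    show "{bg m n + bg n m |m n. m \<in> K \<and> n \<in> UNIV} \<subseteq> K"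
      by (auto simp: K_def fadd hom_br[OF hom])
  qed
  have FF_FC: "FF \<subseteq> free_carrier" unfolding FF_def by (rule lie_sp_FC)
  have FFsub: "module.subspace fsc FF" unfolding FF_def lie_sp_def
    by (rule module.subspace_span[OF FM])
  have claimA: "\<exists>\<rho>\<in>FF. bg a b + bg b a - psi \<rho> \<in> J" for a b
  proof -
    define \<alpha> :: "'b list \<Rightarrow> 'k" where "\<alpha> = fdelta [f a]"
    define \<beta> :: "'b list \<Rightarrow> 'k" where "\<beta> = fdelta [f b]"
    define a' where "a' = s (f a)"
    define b' where "b' = s (f b)"
    have aFC: "\<alpha> \<in> free_carrier" and bFC: "\<beta> \<in> free_carrier"
      unfolding \<alpha>_def \<beta>_def by (rule fdelta_FC)+
    have pa: "psi \<alpha> = a'" unfolding \<alpha>_def a'_def by (simp add: psi_fdelta Lw_single)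
    have pb: "psi \<beta> = b'" unfolding \<beta>_def b'_def by (simp add: psi_fdelta Lw_single)
    define \<rho> where "\<rho> = fbr \<alpha> \<beta> + fbr \<beta> \<alpha>"
    have rFF: "\<rho> \<in> FF" unfolding \<rho>_def FF_def lie_sp_def
      by (rule module.span_base[OF FM]) (use aFC bFC in blast)
    have pr: "psi \<rho> = bg a' b' + bg b' a'"
      unfolding \<rho>_def
      by (simp only: psi_add[OF FC_fin[OF fbr_FC] FC_fin[OF fbr_FC]] psi_fbr[OF aFC bFC]
          psi_fbr[OF bFC aFC] pa pb)
    have k1: "a - a' \<in> K" unfolding K_def a'_def by (simp add: fdiff)
    have k2: "b - b' \<in> K" unfolding K_def b'_def by (simp add: fdiff)
    have eq: "bg a b + bg b a - (bg a' b' + bg b' a')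
        = (bg (a - a') b + bg b (a - a')) + (bg (b - b') a' + bg a' (b - b'))"
      by (simp add: g.diffL g.diffR algebra_simps)
    have "bg a b + bg b a - psi \<rho> \<in> J"
      unfolding pr eq unfolding J_def lie_sp_def
      by (rule g.span_add; rule g.span_base) (use k1 k2 in \<open>auto simp: J_def lie_sp_def K_def\<close>)
    with rFF show ?thesis by blast
  qed
  define P where "P = {x. \<exists>\<rho>\<in>FF. x - psi \<rho> \<in> J}"
  have Psub: "g.subspace P"
  proof (rule g.subspaceI)
    have z: "(0::'b list \<Rightarrow> 'k) \<in> FF" unfolding FF_def lie_sp_def by (rule module.span_zero[OF FM])
    have "(0::'a) - psi 0 \<in> J" using g.subspace_0[OF Jsub] by simp
    then show "0 \<in> P" unfolding P_def using z by blast
  next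
    fix x y assume "x \<in> P" "y \<in> P"
    then obtain \<rho>1 \<rho>2 where r: "\<rho>1 \<in> FF" "x - psi \<rho>1 \<in> J" "\<rho>2 \<in> FF" "y - psi \<rho>2 \<in> J"
      unfolding P_def by blast
    have r1F: "\<rho>1 \<in> free_carrier" and r2F: "\<rho>2 \<in> free_carrier" using r FF_FC by blast+
    have i1: "\<rho>1 + \<rho>2 \<in> FF" by (rule module.subspace_add[OF FM FFsub r(1) r(3)])
    have i2: "x + y - psi (\<rho>1 + \<rho>2) = (x - psi \<rho>1) + (y - psi \<rho>2)"
      by (simp only: psi_add[OF FC_fin[OF r1F] FC_fin[OF r2F]]) (simp add: algebra_simps)
    have i3: "(x - psi \<rho>1) + (y - psi \<rho>2) \<in> J"
      by (rule g.subspace_add[OF Jsub r(2) r(4)])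
    show "x + y \<in> P" unfolding P_def mem_Collect_eq
      by (rule bexI[OF _ i1]) (simp only: i2 i3)
  next
    fix c x assume "x \<in> P"
    then obtain \<rho> where r: "\<rho> \<in> FF" "x - psi \<rho> \<in> J"
      unfolding P_def by blast
    have rF: "\<rho> \<in> free_carrier" using r FF_FC by blast
    have i1: "fsc c \<rho> \<in> FF" by (rule module.subspace_scale[OF FM FFsub r(1)])
    have i2: "sg c x - psi (fsc c \<rho>) = sg c (x - psi \<rho>)"
      by (simp only: psi_fsc[OF FC_fin[OF rF]] g.scale_right_diff_distrib)
    have i3: "sg c (x - psi \<rho>) \<in> J"
      by (rule g.subspace_scale[OF Jsub r(2)])
    show "sg c x \<in> P" unfolding P_def mem_Collect_eq
      by (rule bexI[OF _ i1]) (simp only: i2 i3)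
  qed
  have GP: "lie_sp sg bg UNIV UNIV \<subseteq> P"
    unfolding lie_sp_def
    by (rule g.span_minimal[OF _ Psub]) (use claimA in \<open>auto simp: P_def\<close>)
  define Q where "Q = {\<phi> \<in> free_carrier. psi \<phi> \<in> J}"
  have Qsub: "module.subspace fsc Q"
  proof (rule module.subspaceI[OF FM])
    show "0 \<in> Q" unfolding Q_def using FC_zero g.subspace_0[OF Jsub] by simp
  next
    fix x y assume xy: "x \<in> Q" "y \<in> Q"
    then have a: "x \<in> free_carrier" "y \<in> free_carrier" "psi x \<in> J" "psi y \<in> J"
      unfolding Q_def by simp_all
    have "psi (x + y) \<in> J"
      unfolding psi_add[OF FC_fin[OF a(1)] FC_fin[OF a(2)]] by (rule g.subspace_add[OF Jsub a(3) a(4)])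
    then show "x + y \<in> Q" unfolding Q_def using FC_add[OF a(1) a(2)] by simp
  next
    fix c x assume "x \<in> Q"
    then have a: "x \<in> free_carrier" "psi x \<in> J"
      unfolding Q_def by simp_all
    have "psi (fsc c x) \<in> J"
      unfolding psi_fsc[OF FC_fin[OF a(1)]] by (rule g.subspace_scale[OF Jsub a(2)])
    then show "fsc c x \<in> Q" unfolding Q_def using FC_fsc[OF a(1)] by simp
  qed
  have FRQ: "lie_sp fsc fbr free_carrier R \<subseteq> Q"
    unfolding lie_sp_def
  proof (rule module.span_minimal[OF FM _ Qsub])
    show "{fbr m n + fbr n m |m n. m \<in> free_carrier \<and> n \<in> R} \<subseteq> Q"
    proof
      fix x assume "x \<in> {fbr m n + fbr n m |m n. m \<in> free_carrier \<and> n \<in> R}"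
      then obtain m n where x: "x = fbr m n + fbr n m" "m \<in> free_carrier" "n \<in> R" by blast
      have nFC: "n \<in> free_carrier" and fn: "f (psi n) = 0"
        using x(3) f_psi unfolding R_def pres_ker_def by auto
      have "psi x = bg (psi n) (psi m) + bg (psi m) (psi n)"
        unfolding x(1)
        by (simp only: psi_add[OF FC_fin[OF fbr_FC] FC_fin[OF fbr_FC]] psi_fbr[OF x(2) nFC]
            psi_fbr[OF nFC x(2)] add.commute)
      moreover have "psi n \<in> K" using fn by (simp add: K_def)
      ultimately have "psi x \<in> J" using genJ by simp
      moreover have "x \<in> free_carrier" unfolding x(1) by (rule FC_add[OF fbr_FC fbr_FC])
      ultimately show "x \<in> Q" by (simp add: Q_def)
    qed
  qed
  have KJ: "K \<subseteq> J"
  proof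
    fix k assume kK: "k \<in> K"
    then have "k \<in> P" using kerin GP by (auto simp: K_def)
    then obtain \<rho> where r: "\<rho> \<in> FF" "k - psi \<rho> \<in> J" unfolding P_def by blast
    have rFC: "\<rho> \<in> free_carrier" using r FF_FC by blast
    have "f (k - psi \<rho>) = 0" using r JK by (auto simp: K_def)
    then have "f (psi \<rho>) = 0" using kK by (simp add: K_def fdiff)
    then have "\<rho> \<in> R" using rFC f_psi by (simp add: R_def pres_ker_def)
    then have "\<rho> \<in> lie_sp fsc fbr free_carrier R"
      using schur r unfolding schur_lie_zero_def R_def FF_def by blast
    then have "psi \<rho> \<in> J" using FRQ Q_def by blast
    then have "(k - psi \<rho>) + psi \<rho> \<in> J" using r g.subspace_add[OF Jsub] by blast
    then show "k \<in> J" by simp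
  qed
  have lcs: "K \<subseteq> lie_lcs sg bg UNIV n" for n
  proof (induct n)
    case 0 then show ?case by simp
  next
    case (Suc n)
    have "J \<subseteq> lie_lcs sg bg UNIV (Suc n)"
      unfolding J_def by (simp add: lie_sp_def, rule g.span_mono) (use Suc in blast)
    then show ?case using KJ by blast
  qed
  obtain n where "lie_lcs sg bg UNIV n = {0}" using nil by (auto simp: lie_nilpotent_def)
  then have K0: "K \<subseteq> {0}" using lcs by blast
  have "inj f"
  proof (rule injI)
    fix x y assume "f x = f y"
    then have "x - y \<in> K" by (simp add: K_def fdiff)
    then show "x = y" using K0 by auto
  qed
  then show ?thesis using sf by (simp add: bij_def)
qed

end

definition tr :: "('x \<Rightarrow> 'y) \<Rightarrow> ('x list \<Rightarrow> 'k::field) \<Rightarrow> ('y list \<Rightarrow> 'k)" where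
  "tr h \<phi> = (\<lambda>w. \<phi> (map (inv h) w))"

lemma tr_add: "tr h (\<phi> + \<chi>) = tr h \<phi> + tr h \<chi>" by (simp add: tr_def fun_eq_iff)
lemma tr_diff: "tr h (\<phi> - \<chi>) = tr h \<phi> - tr h \<chi>" by (simp add: tr_def fun_eq_iff)
lemma tr_fsc: "tr h (fsc c \<phi>) = fsc c (tr h \<phi>)" by (simp add: tr_def fun_eq_iff)
lemma tr_zero: "tr h 0 = 0" by (simp add: tr_def fun_eq_iff)
lemma tr_sum: "tr h (sum g S) = (\<Sum>i\<in>S. tr h (g i))"
  by (simp add: tr_def fun_eq_iff fun_sum_apply')

lemma map_inv1: "bij h \<Longrightarrow> map h (map (inv h) w) = w"
  by (induct w) (simp_all add: bij_is_surj surj_f_inv_f)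
lemma map_inv2: "bij h \<Longrightarrow> map (inv h) (map h w) = w"
  by (induct w) (simp_all add: bij_is_inj inv_f_f)

lemma fsupp_tr: "bij h \<Longrightarrow> fsupp (tr h \<phi>) = map h ` fsupp \<phi>"
proof
  assume b: "bij h"
  show "fsupp (tr h \<phi>) \<subseteq> map h ` fsupp \<phi>"
  proof
    fix x assume "x \<in> fsupp (tr h \<phi>)"
    then have "map (inv h) x \<in> fsupp \<phi>" by (simp add: fsupp_def tr_def)
    then show "x \<in> map h ` fsupp \<phi>" using map_inv1[OF b, of x] by (metis image_eqI)
  qed
  show "map h ` fsupp \<phi> \<subseteq> fsupp (tr h \<phi>)"
    using map_inv2[OF b] by (auto simp: fsupp_def tr_def)
qed

lemma tr_FC: "bij h \<Longrightarrow> \<phi> \<in> free_carrier \<Longrightarrow> tr h \<phi> \<in> free_carrier"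
  by (simp add: FC_iff fsupp_tr) (simp add: tr_def)

lemma tr_fdelta: "bij h \<Longrightarrow> tr h (fdelta x) = fdelta (map h x)"
proof -
  assume b: "bij h"
  have "(map (inv h) w = x) = (w = map h x)" for w
    using map_inv1[OF b, of w] map_inv2[OF b, of x] by metis
  then show ?thesis by (simp add: tr_def fdelta_def fun_eq_iff)
qed

lemma tr_fapp: "bij h \<Longrightarrow> tr h (fapp v \<phi>) = fapp (h v) (tr h \<phi>)"
proof -
  assume b: "bij h"
  have e: "(inv h y = v) = (y = h v)" for y
    using b by (metis bij_inv_eq_iff)
  show ?thesis
  proof
    fix w
    show "tr h (fapp v \<phi>) w = fapp (h v) (tr h \<phi>) w"
    proof (cases "w = []")
      case True then show ?thesis by (simp add: tr_def fapp_def)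
    next
      case False then show ?thesis by (simp add: tr_def fapp_def last_map map_butlast e)
    qed
  qed
qed

lemma tr_wbr_rev:
  fixes h :: "'x \<Rightarrow> 'y"
  shows "bij h \<Longrightarrow> tr h (wbr_rev u r :: 'x list \<Rightarrow> 'k::field) = wbr_rev (map h u) (map h r)"
proof (induct u r rule: wbr_rev.induct)
  case (1 u) then show ?case by (simp add: tr_def fun_eq_iff)
next
  case (2 u v) then show ?case by (simp add: tr_fdelta)
next
  case (3 u v v' r)
  have b: "bij h" by fact
  have "tr h (wbr_rev u (v#v'#r) :: 'x list \<Rightarrow> 'k) = tr h (fapp v (wbr_rev u (v'#r))) - tr h (wbr_rev (u@[v]) (v'#r))"
    by (simp only: wbr_rev.simps tr_diff)
  also have "\<dots> = fapp (h v) (tr h (wbr_rev u (v'#r))) - tr h (wbr_rev (u@[v]) (v'#r))"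
    by (simp only: tr_fapp[OF b])
  also have "\<dots> = fapp (h v) (wbr_rev (map h u) (map h (v'#r))) - wbr_rev (map h (u@[v])) (map h (v'#r))"
    by (subst 3(1), fact b, subst 3(2), fact b, rule refl)
  also have "\<dots> = wbr_rev (map h u) (map h (v#v'#r))"
    by (simp only: list.map wbr_rev.simps map_append)
  finally show ?case .
qed

lemma tr_wbr: "bij h \<Longrightarrow> tr h (wbr u w) = wbr (map h u) (map h w)"
  by (simp add: wbr_def tr_wbr_rev rev_map)

lemma tr_fbr: "bij h \<Longrightarrow> tr h (fbr \<phi> \<chi>) = fbr (tr h \<phi>) (tr h \<chi>)"
proof -
  assume b: "bij h"
  have inj: "inj_on (map h) A" for A
    using b by (simp add: bij_is_inj inj_mapI inj_on_subset[of _ UNIV])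
  have "fbr (tr h \<phi>) (tr h \<chi>) =
     (\<Sum>u\<in>map h ` fsupp \<phi>. \<Sum>w\<in>map h ` fsupp \<chi>. fsc (tr h \<phi> u * tr h \<chi> w) (wbr u w))"
    by (simp only: fbr_def fsupp_tr[OF b])
  also have "\<dots> = (\<Sum>u\<in>fsupp \<phi>. \<Sum>w\<in>fsupp \<chi>. fsc (\<phi> u * \<chi> w) (wbr (map h u) (map h w)))"
    by (simp add: sum.reindex[OF inj] tr_def inv_o_cancel[OF bij_is_inj[OF b]])
  also have "\<dots> = tr h (fbr \<phi> \<chi>)"
    by (simp add: fbr_def tr_sum tr_fsc tr_wbr[OF b])
  finally show ?thesis by simp
qed

lemma pres_tr:
  assumes hom: "leib_hom sa ba sb bb h" and b: "bij h" and FC: "\<phi> \<in> free_carrier"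
  shows "pres_map sb bb (tr h \<phi>) = h (pres_map sa ba \<phi>)"
proof -
  have inj: "inj_on (map h) A" for A
    using b by (simp add: bij_is_inj inj_mapI inj_on_subset[of _ UNIV])
  have "pres_map sb bb (tr h \<phi>) = (\<Sum>u\<in>fsupp \<phi>. sb (\<phi> u) (left_normed bb (map h u)))"
    by (simp only: pres_map_def fsupp_tr[OF b] sum.reindex[OF inj] o_def) (simp add: tr_def inv_o_cancel[OF bij_is_inj[OF b]])
  also have "\<dots> = (\<Sum>u\<in>fsupp \<phi>. h (sa (\<phi> u) (left_normed ba u)))"
    by (rule sum.cong[OF refl])
      (simp add: module_hom.scale[OF hom_lin[OF hom]] hom_left_normed[OF hom] FC_fsupp[OF FC])
  also have "\<dots> = h (pres_map sa ba \<phi>)"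
    by (simp add: pres_map_def module_hom.sum[OF hom_lin[OF hom]])
  finally show ?thesis .
qed

lemma tr_span:
  fixes h :: "'x \<Rightarrow> 'y"
  assumes x: "x \<in> module.span (fsc :: 'k::field \<Rightarrow> _) S"
  shows "tr h x \<in> module.span (fsc :: 'k \<Rightarrow> _) (tr h ` S)"
proof -
  have FM: "module (fsc :: 'k \<Rightarrow> ('x list \<Rightarrow> 'k) \<Rightarrow> _)" by (rule fsc_mod)
  have FM2: "module (fsc :: 'k \<Rightarrow> ('y list \<Rightarrow> 'k) \<Rightarrow> _)" by (rule fsc_mod)
  define T where "T = {x. tr h x \<in> module.span (fsc :: 'k \<Rightarrow> _) (tr h ` S)}"
  have "module.subspace fsc T"
  proof (rule module.subspaceI[OF FM])
    show "0 \<in> T" unfolding T_def by (simp add: tr_zero module.span_zero[OF FM2])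
    show "x + y \<in> T" if "x \<in> T" "y \<in> T" for x y
      using that unfolding T_def by (simp add: tr_add module.span_add[OF FM2])
    show "fsc c x \<in> T" if "x \<in> T" for c x
      using that unfolding T_def by (simp add: tr_fsc module.span_scale[OF FM2])
  qed
  moreover have "S \<subseteq> T" unfolding T_def
    using module.span_base[OF FM2] by blast
  ultimately have "module.span fsc S \<subseteq> T" by (rule module.span_minimal[OF FM, rotated])
  then show ?thesis using x T_def by blast
qed

lemma tr_lie_sp:
  assumes b: "bij h" and X: "X \<subseteq> free_carrier" and Y: "Y \<subseteq> free_carrier"
    and x: "x \<in> lie_sp (fsc :: 'k::field \<Rightarrow> _) fbr X Y"
  shows "tr h x \<in> lie_sp (fsc :: 'k \<Rightarrow> _) fbr (tr h ` X) (tr h ` Y)"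
proof -
  have FM2: "module (fsc :: 'k \<Rightarrow> ('y list \<Rightarrow> 'k) \<Rightarrow> _)" by (rule fsc_mod)
  have "tr h x \<in> module.span fsc (tr h ` {fbr m n + fbr n m |m n. m \<in> X \<and> n \<in> Y})"
    using x unfolding lie_sp_def by (rule tr_span)
  moreover have "tr h ` {fbr m n + fbr n m |m n. m \<in> X \<and> n \<in> Y}
      \<subseteq> {fbr m n + fbr n m |m n. m \<in> tr h ` X \<and> n \<in> tr h ` Y}"
  proof
    fix z assume "z \<in> tr h ` {fbr m n + fbr n m |m n. m \<in> X \<and> n \<in> Y}"
    then obtain m n where z: "z = tr h (fbr m n + fbr n m)" "m \<in> X" "n \<in> Y" by blast
    have "z = fbr (tr h m) (tr h n) + fbr (tr h n) (tr h m)"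
      by (simp only: z(1) tr_add tr_fbr[OF b])
    moreover have "tr h m \<in> tr h ` X" "tr h n \<in> tr h ` Y" using z by blast+
    ultimately show "z \<in> {fbr m n + fbr n m |m n. m \<in> tr h ` X \<and> n \<in> tr h ` Y}" by blast
  qed
  ultimately show ?thesis unfolding lie_sp_def using module.span_mono[OF FM2] by blast
qed

lemma lie_sp_mono_f:
  "X \<subseteq> X' \<Longrightarrow> Y \<subseteq> Y' \<Longrightarrow> lie_sp (fsc :: 'k::field \<Rightarrow> ('x list \<Rightarrow> 'k) \<Rightarrow> _) fbr X Y \<subseteq> lie_sp fsc fbr X' Y'"
  unfolding lie_sp_def by (rule module.span_mono[OF fsc_mod]) blast

lemma tr_inv: "bij h \<Longrightarrow> tr (inv h) (tr h \<phi>) = \<phi>"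
  by (simp add: tr_def fun_eq_iff inv_inv_eq inv_o_cancel[OF bij_is_inj])

lemma inv_hom:
  assumes la: "leibniz sa UNIV ba" and lb: "leibniz sb UNIV bb"
    and hom: "leib_hom sa ba sb bb h" and b: "bij h"
  shows "leib_hom sb bb sa ba (inv h)"
proof -
  have ma: "module sa" and mb: "module sb"
    using la lb by (simp_all add: leibniz_def module_iff_vector_space)
  have inj: "inj h" using b bij_is_inj by blast
  have hi: "h (inv h y) = y" for y using b by (simp add: bij_is_surj surj_f_inv_f)
  have ha: "h (x + y) = h x + h y" for x y using module_hom.add[OF hom_lin[OF hom]] .
  have hs: "h (sa c x) = sb c (h x)" for c x using module_hom.scale[OF hom_lin[OF hom]] .
  have hb: "h (ba x y) = bb (h x) (h y)" for x y using hom_br[OF hom] .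
  have "inv h (x + y) = inv h x + inv h y" for x y
    by (rule inv_f_eq[OF inj]) (simp add: ha hi)
  moreover have "inv h (sb c x) = sa c (inv h x)" for c x
    by (rule inv_f_eq[OF inj]) (simp add: hs hi)
  moreover have "inv h (bb x y) = ba (inv h x) (inv h y)" for x y
    by (rule inv_f_eq[OF inj]) (simp add: hb hi)
  ultimately show ?thesis
    unfolding leib_hom_def
    using ma mb by (simp add: module_hom_iff_linear[symmetric] module_hom_def module_hom_axioms_def)
qed

lemma schur_transfer:
  assumes la: "leibniz sa UNIV ba" and lb: "leibniz sb UNIV bb"
    and hom: "leib_hom sa ba sb bb h" and b: "bij h"
    and sch: "schur_lie_zero sb bb"
  shows "schur_lie_zero sa ba"
  unfolding schur_lie_zero_def
proof (rule subsetI)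
  fix \<rho> assume r: "\<rho> \<in> pres_ker sa ba \<inter> lie_sp fsc fbr free_carrier free_carrier"
  have hom': "leib_hom sb bb sa ba (inv h)" by (rule inv_hom[OF la lb hom b])
  have b': "bij (inv h)" by (rule bij_imp_bij_inv[OF b])
  have rK: "\<rho> \<in> pres_ker sa ba" using r by (rule IntD1)
  have rFF: "\<rho> \<in> lie_sp fsc fbr free_carrier free_carrier" using r by (rule IntD2)
  have rFC: "\<rho> \<in> free_carrier" and p0: "pres_map sa ba \<rho> = 0"
    using rK unfolding pres_ker_def by simp_all
  have t1: "tr h \<rho> \<in> free_carrier" by (rule tr_FC[OF b rFC])
  have t2: "pres_map sb bb (tr h \<rho>) = 0"
    by (simp only: pres_tr[OF hom b rFC] p0 module_hom.zero[OF hom_lin[OF hom]])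
  have t3a: "tr h \<rho> \<in> lie_sp fsc fbr (tr h ` free_carrier) (tr h ` free_carrier)"
    by (rule tr_lie_sp[OF b order_refl order_refl rFF])
  have im1: "tr h ` free_carrier \<subseteq> free_carrier"
    by (rule image_subsetI, rule tr_FC[OF b])
  have t3: "tr h \<rho> \<in> lie_sp fsc fbr free_carrier free_carrier"
    by (rule subsetD[OF lie_sp_mono_f[OF im1 im1] t3a])
  have t4: "tr h \<rho> \<in> pres_ker sb bb" unfolding pres_ker_def using t1 t2 by simp
  have t5: "tr h \<rho> \<in> lie_sp fsc fbr free_carrier (pres_ker sb bb)"
  proof -
    have S: "pres_ker sb bb \<inter> lie_sp fsc fbr free_carrier free_carrier
       \<subseteq> lie_sp fsc fbr free_carrier (pres_ker sb bb)"
      using sch unfolding schur_lie_zero_def .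
    show ?thesis by (rule subsetD[OF S IntI[OF t4 t3]])
  qed
  have RB: "pres_ker sb bb \<subseteq> free_carrier" unfolding pres_ker_def by (rule Collect_restrict)
  have t6: "tr (inv h) (tr h \<rho>) \<in>
      lie_sp fsc fbr (tr (inv h) ` free_carrier) (tr (inv h) ` pres_ker sb bb)"
    by (rule tr_lie_sp[OF b' order_refl RB t5])
  have im2: "tr (inv h) ` free_carrier \<subseteq> free_carrier"
    by (rule image_subsetI, rule tr_FC[OF b'])
  have im3: "tr (inv h) ` pres_ker sb bb \<subseteq> pres_ker sa ba"
  proof (rule image_subsetI)
    fix n assume n: "n \<in> pres_ker sb bb"
    have nFC: "n \<in> free_carrier" and pn: "pres_map sb bb n = 0" using n unfolding pres_ker_def by simp_all
    have "pres_map sa ba (tr (inv h) n) = 0"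
      by (simp only: pres_tr[OF hom' b' nFC] pn module_hom.zero[OF hom_lin[OF hom']])
    then show "tr (inv h) n \<in> pres_ker sa ba" using tr_FC[OF b' nFC] unfolding pres_ker_def by simp
  qed
  show "\<rho> \<in> lie_sp fsc fbr free_carrier (pres_ker sa ba)"
    using subsetD[OF lie_sp_mono_f[OF im2 im3] t6] by (simp only: tr_inv[OF b])
qed

lemma part1_gen:
  fixes sg :: "'k::field \<Rightarrow> 'a::ab_group_add \<Rightarrow> 'a" and bg :: "'a \<Rightarrow> 'a \<Rightarrow> 'a"
    and sq :: "'k \<Rightarrow> 'b::ab_group_add \<Rightarrow> 'b" and bq and f :: "'a \<Rightarrow> 'b"
  assumes "leibniz sg UNIV bg" "lie_nilpotent sg bg UNIV" "leibniz sq UNIV bq"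
    "leib_hom sg bg sq bq f" "surj f" "{x. f x = 0} \<subseteq> lie_sp sg bg UNIV UNIV" "schur_lie_zero sq bq"
  shows "bij f"
proof -
  have "p1 sg bg sq bq f"
    by (intro p1.intro leib.intro p1_axioms.intro assms)
  then show ?thesis by (rule p1.part1[OF _ assms(2) assms(6) assms(7)])
qed

theorem mainTheorem10:
  fixes sg :: "'k::field \<Rightarrow> 'a::ab_group_add \<Rightarrow> 'a" and bg :: "'a \<Rightarrow> 'a \<Rightarrow> 'a"
  assumes half: "(2::'k) \<noteq> 0"
    and g_leib: "leibniz sg UNIV bg"
    and g_nil: "lie_nilpotent sg bg UNIV"
  shows "(\<forall>(sq :: 'k \<Rightarrow> 'b::ab_group_add \<Rightarrow> 'b) bq (f :: 'a \<Rightarrow> 'b).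
            leibniz sq UNIV bq \<and> leib_hom sg bg sq bq f \<and> surj f
            \<and> {x. f x = 0} \<subseteq> lie_sp sg bg UNIV UNIV \<and> schur_lie_zero sq bq
            \<longrightarrow> bij f)
       \<and> (\<forall>(sc :: 'k \<Rightarrow> 'c::ab_group_add \<Rightarrow> 'c) bc (p :: 'a \<Rightarrow> 'c).
            leibniz sc UNIV bc \<and> leib_hom sg bg sc bc p \<and> surj p
            \<and> {x. p x = 0} = lie_sp sg bg UNIV UNIV \<and> schur_lie_zero sc bc
            \<longrightarrow> schur_lie_zero sg bg)"
proof (intro conjI allI impI)
  fix sq :: "'k \<Rightarrow> 'b::ab_group_add \<Rightarrow> 'b" and bq and f :: "'a \<Rightarrow> 'b"
  assume a: "leibniz sq UNIV bq \<and> leib_hom sg bg sq bq f \<and> surj f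
            \<and> {x. f x = 0} \<subseteq> lie_sp sg bg UNIV UNIV \<and> schur_lie_zero sq bq"
  then have a1: "leibniz sq UNIV bq" and a2: "leib_hom sg bg sq bq f" and a3: "surj f"
    and a4: "{x. f x = 0} \<subseteq> lie_sp sg bg UNIV UNIV" and a5: "schur_lie_zero sq bq" by simp_all
  show "bij f" by (rule part1_gen[OF g_leib g_nil a1 a2 a3 a4 a5])
next
  fix sc :: "'k \<Rightarrow> 'c::ab_group_add \<Rightarrow> 'c" and bc and p :: "'a \<Rightarrow> 'c"
  assume a: "leibniz sc UNIV bc \<and> leib_hom sg bg sc bc p \<and> surj p
            \<and> {x. p x = 0} = lie_sp sg bg UNIV UNIV \<and> schur_lie_zero sc bc"
  then have a1: "leibniz sc UNIV bc" and a2: "leib_hom sg bg sc bc p" and a3: "surj p"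
    and a4: "{x. p x = 0} = lie_sp sg bg UNIV UNIV" and a5: "schur_lie_zero sc bc" by simp_all
  have b: "bij p" by (rule part1_gen[OF g_leib g_nil a1 a2 a3 equalityD1[OF a4] a5])
  show "schur_lie_zero sg bg" by (rule schur_transfer[OF g_leib a1 a2 b a5])
qed

end
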